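(* Let $L\in(\Sigma^4_{2,8})^\star$ and $F=\langle L,q(a,b,c)^4\rangle\in\mathbb{R}[a,b,c]_4$, and suppose that the set $\mathcal{V}(F)(\mathbb{R})\subset\mathbb{P}^2(\mathbb{R})$ of real zeros of $F$ is finite. Then $|\mathcal{V}(F)(\mathbb{R})|\le3$. Equivalently: every ternary quartic $F$ lying in $\partial\Sigma^2_{3,4}\cap U$ with only finitely many real projective zeros has at most $3$ real zeros.
   Context: Apolarity pairing on $\mathbb{R}[x,y]$: $\langle x^{\alpha_1}y^{\alpha_2},x^{\beta_1}y^{\beta_2}\rangle=\frac{\beta_1!\beta_2!}{\alpha_1!\alpha_2!}x^{\beta_1-\alpha_1}y^{\beta_2-\alpha_2}$ if $\alpha_i\le\beta_i$, and $0$ otherwise, extended bilinearly. $\Sigma^4_{2,8}\subset\mathbb{R}[x,y]_8$ is the cone of finite sums of fourth powers of real binary quadratic forms and $(\Sigma^4_{2,8})^\star=\{L\in\mathbb{R}[x,y]_8:\langle L,q^4\rangle\ge0\ \forall q\in\mathbb{R}[x,y]_2\}$. With variables $a,b,c$, $q(a,b,c)=ax^2+bxy+cy^2$ and $\langle L,q(a,b,c)^4\rangle\in\mathbb{R}[a,b,c]_4$ is computed in $x,y$ treating $a,b,c$ as scalars. $U\subset\mathbb{R}[a,b,c]_4$ is the $9$-dimensional subspace $\{\langle L,q(a,b,c)^4\rangle: L\in\mathbb{R}[x,y]_8\}$ (equivalently the apolar orthogonal complement of the degree-4 part of the ideal $(b^2-ac)$); $\Sigma^2_{3,4}$ is the cone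 of nonnegative (equivalently, sums of squares) ternary quartics, and $\partial\Sigma^2_{3,4}$ its boundary. Under $L\mapsto\langle L,q(a,b,c)^4\rangle$, $(\Sigma^4_{2,8})^\star$ corresponds to $\Sigma^2_{3,4}\cap U$. *)

theory Defs
  imports "HOL-Analysis.Analysis" "HOL-Computational_Algebra.Polynomial"
begin

text \<open>A binary octic form L in R[x,y]_8 is encoded by its coefficient function:
  L i is the coefficient of x^i y^(8-i), for i = 0..8 (other values are ignored).\<close>

text \<open>Apolarity pairing restricted to R[x,y]_8 x R[x,y]_8: for monomials of equal
  degree 8, alpha <= beta componentwise forces alpha = beta, and the factor
  beta1! beta2! / (alpha1! alpha2!) equals 1.  Hence the pairing is the plain
  coordinate dot product of coefficient vectors.\<close>
definition apolar8 :: "(nat \<Rightarrow> real) \<Rightarrow> (nat \<Rightarrow> real) \<Rightarrow> real" where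
  "apolar8 L M = (\<Sum>i\<le>8. L i * M i * (fact i * fact (8 - i)) / (fact i * fact (8 - i)))"

text \<open>Coefficients of q(a,b,c)^4 where q = a x^2 + b x y + c y^2: the coefficient of
  x^i y^(8-i) equals the coefficient of x^i in (a x^2 + b x + c)^4 (dehomogenise y = 1).\<close>
definition qpow4 :: "real \<Rightarrow> real \<Rightarrow> real \<Rightarrow> nat \<Rightarrow> real" where
  "qpow4 a b c i = coeff ([:c, b, a:] ^ 4) i"

definition Fquart :: "(nat \<Rightarrow> real) \<Rightarrow> real \<times> real \<times> real \<Rightarrow> real" where
  "Fquart L v = (case v of (a, b, c) \<Rightarrow> apolar8 L (qpow4 a b c))"

definition in_dual_cone :: "(nat \<Rightarrow> real) \<Rightarrow> bool" where
  "in_dual_cone L \<longleftrightarrow> (\<forall>a b c. apolar8 L (qpow4 a b c) \<ge> 0)"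

definition proj_real_zeros :: "(real \<times> real \<times> real \<Rightarrow> real) \<Rightarrow> (real \<times> real \<times> real) set set" where
  "proj_real_zeros F = {{t *\<^sub>R v | t. True} | v. v \<noteq> 0 \<and> F v = 0}"

end

theory Submission
  imports Defs
begin



definition FF :: "(nat \<Rightarrow> real) \<Rightarrow> real \<Rightarrow> real \<Rightarrow> real \<Rightarrow> real" where
 "FF L a b c = L 0 * c^4 + L 1 * (4*b*c^3) + L 2 * (6*b^2*c^2 + 4*a*c^3)
   + L 3 * (4*b^3*c + 12*a*b*c^2) + L 4 * (b^4 + 12*a*b^2*c + 6*a^2*c^2)
   + L 5 * (4*a*b^3 + 12*a^2*b*c) + L 6 * (6*a^2*b^2 + 4*a^3*c) + L 7 * (4*a^3*b) + L 8 * a^4"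

lemma qpow_expl: "[:c,b,a:]^4 = [:c^4, 4*b*c^3, 6*b^2*c^2 + 4*a*c^3, 4*b^3*c + 12*a*b*c^2,
   b^4 + 12*a*b^2*c + 6*a^2*c^2, 4*a*b^3 + 12*a^2*b*c, 6*a^2*b^2 + 4*a^3*c, 4*a^3*b, a^4::real:]"
  by (simp add: power_numeral_reduce power2_eq_square algebra_simps numeral_eq_Suc)

definition ell :: "(nat \<Rightarrow> real) \<Rightarrow> real poly \<Rightarrow> real" where
  "ell L P = (\<Sum>i\<le>8. L i * coeff P i)"

lemma sum9: "(\<Sum>i\<le>(8::nat). f i) = f 0 + f 1 + f 2 + f 3 + f 4 + f 5 + f 6 + f 7 + (f 8::real)"
  by (simp add: numeral_eq_Suc atMost_Suc add.commute add.left_commute)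

lemma apolar8_simp: "apolar8 L M = (\<Sum>i\<le>8. L i * M i)"
  unfolding apolar8_def by (intro sum.cong refl) simp

lemma ell_FF: "ell L ([:c,b,a:]^4) = FF L a b c"
  unfolding ell_def qpow_expl sum9 FF_def by (simp add: numeral_eq_Suc)

lemma Fquart_FF: "Fquart L (a,b,c) = FF L a b c"
  unfolding Fquart_def apolar8_simp qpow4_def using ell_FF[of L c b a] by (simp add: ell_def)


lemma quart_expand:
  fixes A B C u w :: "'a::idom"
  shows "(A*u^2 + B*u*w + C*w^2)^4 = C^4*w^8 + (4*B*C^3)*(u*w^7) + (6*B^2*C^2 + 4*A*C^3)*(u^2*w^6)
   + (4*B^3*C + 12*A*B*C^2)*(u^3*w^5) + (B^4 + 12*A*B^2*C + 6*A^2*C^2)*(u^4*w^4)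
   + (4*A*B^3 + 12*A^2*B*C)*(u^5*w^3) + (6*A^2*B^2 + 4*A^3*C)*(u^6*w^2) + (4*A^3*B)*(u^7*w) + A^4*u^8"
  by algebra

lemma ell_add: "ell L (P + Q) = ell L P + ell L Q"
  by (simp add: ell_def algebra_simps sum.distrib)

lemma ell_smult: "ell L (smult k P) = k * ell L P"
  by (simp add: ell_def sum_distrib_left algebra_simps)

lemma ell_const: "ell L ([:k:] * P) = k * ell L P"
  by (simp add: ell_smult)

lemma cpow: "[:a:]^n = [:a^n::real:]"
  by (induction n) (simp_all add: mult.commute)

lemma cnum: "(numeral k::real poly) = [:numeral k:]"
  by (simp add: numeral_poly)

lemma cmul: "[:a:] * [:b:] = [:a*b::real:]" by simp
lemma cadd: "[:a:] + [:b:] = [:a+b::real:]" by simp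

lemma ell_quart:
  fixes U W :: "real poly"
  shows "ell L (([:x:]*U^2 + [:y:]*U*W + [:z:]*W^2)^4) = FF (\<lambda>m. ell L (U^m * W^(8-m))) x y z"
  unfolding quart_expand
  apply (simp only: cpow cnum cmul cadd ell_add ell_const mult.assoc[symmetric])
  apply (simp only: mult.assoc cmul ell_const)
  apply (simp add: FF_def mult_ac)
  done



lemma lim_sign:
  fixes c d e f :: real
  assumes h: "\<And>t. t > 0 \<Longrightarrow> 0 \<le> c + t*(d + t*(e + t*f))"
  shows "0 \<le> c"
proof (rule ccontr)
  assume "\<not> 0 \<le> c" hence c: "c < 0" by simp
  define M where "M = \<bar>d\<bar> + \<bar>e\<bar> + \<bar>f\<bar> + 1"
  have M: "M \<ge> 1" unfolding M_def by simp
  define t where "t = min 1 (-c/(2*M))"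
  have t0: "t > 0" unfolding t_def using c M by (simp add: divide_neg_pos)
  have t1: "t \<le> 1" unfolding t_def by simp
  have t2: "t \<le> -c/(2*M)" unfolding t_def by simp
  have tM: "t*M \<le> -c/2" using t2 M by (simp add: field_simps)
  have b1: "\<bar>e + t*f\<bar> \<le> \<bar>e\<bar> + \<bar>f\<bar>"
  proof -
    have "\<bar>t*f\<bar> \<le> \<bar>f\<bar>" using t0 t1 by (simp add: abs_mult mult_left_le_one_le)
    thus ?thesis by (smt (verit))
  qed
  have b2: "\<bar>d + t*(e + t*f)\<bar> \<le> M"
  proof -
    have "\<bar>t*(e + t*f)\<bar> \<le> \<bar>e + t*f\<bar>" using t0 t1 by (simp add: abs_mult mult_left_le_one_le)
    thus ?thesis using b1 unfolding M_def by (smt (verit))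
  qed
  have "t*(d + t*(e + t*f)) \<le> t*M"
    using b2 t0 by (smt (verit) abs_le_D1 mult_left_mono)
  hence "c + t*(d + t*(e + t*f)) < 0" using tM c by linarith
  with h[OF t0] show False by linarith
qed

lemma tpoly:
  fixes c0 c1 c2 c3 c4 :: real
  assumes h: "\<And>t. 0 \<le> c0 + c1*t + c2*t^2 + c3*t^3 + c4*t^4" and z: "c0 = 0"
  shows "c1 = 0" "0 \<le> c2" "c2 = 0 \<Longrightarrow> c3 = 0"
proof -
  have a: "0 \<le> c1" 
  proof (rule lim_sign[of c1 c2 c3 c4])
    fix t :: real assume t: "t > 0"
    have "0 \<le> t*(c1 + t*(c2 + t*(c3 + t*c4)))" using h[of t] z
      by (simp add: algebra_simps power2_eq_square power3_eq_cube power4_eq_xxxx)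
    thus "0 \<le> c1 + t*(c2 + t*(c3 + t*c4))" using t by (simp add: zero_le_mult_iff)
  qed
  have b: "0 \<le> -c1"
  proof (rule lim_sign[of "-c1" c2 "-c3" c4])
    fix t :: real assume t: "t > 0"
    have "0 \<le> t*(-c1 + t*(c2 + t*(-c3 + t*c4)))" using h[of "-t"] z
      by (simp add: algebra_simps power2_eq_square power3_eq_cube power4_eq_xxxx)
    thus "0 \<le> -c1 + t*(c2 + t*(-c3 + t*c4))" using t by (simp add: zero_le_mult_iff)
  qed
  from a b show c1: "c1 = 0" by simp
  show "0 \<le> c2"
  proof (rule lim_sign[of c2 c3 c4 0])
    fix t :: real assume t: "t > 0"
    have "0 \<le> (t*t)*(c2 + t*(c3 + t*(c4 + t*0)))" using h[of t] z c1
      by (simp add: algebra_simps power2_eq_square power3_eq_cube power4_eq_xxxx)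
    thus "0 \<le> c2 + t*(c3 + t*(c4 + t*0))" using t mult_pos_pos[OF t t] mult_pos_pos[OF mult_pos_pos[OF t t] t] by (auto simp: zero_le_mult_iff)
  qed
  assume c2: "c2 = 0"
  have a: "0 \<le> c3"
  proof (rule lim_sign[of c3 c4 0 0])
    fix t :: real assume t: "t > 0"
    have "0 \<le> (t*t*t)*(c3 + t*(c4 + t*(0 + t*0)))" using h[of t] z c1 c2
      by (simp add: algebra_simps power2_eq_square power3_eq_cube power4_eq_xxxx)
    thus "0 \<le> c3 + t*(c4 + t*(0 + t*0))" using t mult_pos_pos[OF t t] mult_pos_pos[OF mult_pos_pos[OF t t] t] by (auto simp: zero_le_mult_iff)
  qed
  have b: "0 \<le> -c3"
  proof (rule lim_sign[of "-c3" c4 0 0])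
    fix t :: real assume t: "t > 0"
    have "0 \<le> (t*t*t)*(-c3 + t*(c4 + t*(0 + t*0)))" using h[of "-t"] z c1 c2
      by (simp add: algebra_simps power2_eq_square power3_eq_cube power4_eq_xxxx)
    thus "0 \<le> -c3 + t*(c4 + t*(0 + t*0))" using t mult_pos_pos[OF t t] mult_pos_pos[OF mult_pos_pos[OF t t] t] by (auto simp: zero_le_mult_iff)
  qed
  from a b show "c3 = 0" by simp
qed

lemma quad_disc:
  fixes A B C :: real
  assumes A: "A > 0" and h: "\<And>b. 0 \<le> A*b^2 + B*b + C"
  shows "0 \<le> 4*A*C - B^2"
proof -
  have "0 \<le> A*(-B/(2*A))^2 + B*(-B/(2*A)) + C" by (rule h)
  also have "\<dots> = (4*A*C - B^2)/(4*A)" using A by (simp add: field_simps power2_eq_square)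
  finally show ?thesis using A by (simp add: zero_le_divide_iff)
qed

lemma quad_zero:
  fixes A B C b :: real
  assumes A: "A > 0" and h: "\<And>b. 0 \<le> A*b^2 + B*b + C" and z: "A*b^2 + B*b + C = 0"
  shows "4*A*C - B^2 = 0" "b = -B/(2*A)"
proof -
  have d: "0 \<le> 4*A*C - B^2" by (rule quad_disc[OF A h])
  have e: "4*A*(A*b^2 + B*b + C) = (2*A*b + B)^2 + (4*A*C - B^2)" by (simp add: algebra_simps power2_eq_square)
  hence e2: "(2*A*b + B)^2 + (4*A*C - B^2) = 0" using z by simp
  have "(2*A*b + B)^2 \<ge> 0" by simp
  hence s: "(2*A*b + B)^2 = 0" and "4*A*C - B^2 = 0" using d e2 by linarith+
  thus "4*A*C - B^2 = 0" by simp
  from s have "2*A*b + B = 0" by simp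
  thus "b = -B/(2*A)" using A by (simp add: field_simps)
qed

lemma poly_min_deriv:
  fixes p :: "real poly"
  assumes "\<And>t. 0 \<le> poly p t" "poly p a = 0"
  shows "poly (pderiv p) a = 0"
  by (rule DERIV_local_min[OF poly_DERIV, of 1]) (use assms in auto)

lemma cube_inj: fixes x y :: real shows "x^3 = y^3 \<Longrightarrow> x = y"
  by (metis odd_real_root_power_cancel odd_numeral)



lemma FF_hom: "FF L (k*a) (k*b) (k*c) = k^4 * FF L a b c"
  unfolding FF_def by (simp add: power2_eq_square power3_eq_cube power4_eq_xxxx algebra_simps)

lemma FF_norm: "c \<noteq> 0 \<Longrightarrow> FF L a b c = c^4 * FF L (a/c) (b/c) 1"
  using FF_hom[of L c "a/c" "b/c" 1] by simp

lemma dual_nn: "in_dual_cone L \<Longrightarrow> 0 \<le> FF L a b c"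
proof -
  assume "in_dual_cone L"
  hence "0 \<le> apolar8 L (qpow4 a b c)" unfolding in_dual_cone_def by blast
  moreover have "Fquart L (a,b,c) = apolar8 L (qpow4 a b c)" by (simp add: Fquart_def)
  ultimately show ?thesis using Fquart_FF[of L a b c] by simp
qed

definition nprop :: "real\<times>real\<times>real \<Rightarrow> real\<times>real\<times>real \<Rightarrow> bool" where
  "nprop v w \<longleftrightarrow> v \<noteq> 0 \<and> (\<forall>t. w \<noteq> t *\<^sub>R v)"

definition badline :: "(real\<times>real\<times>real \<Rightarrow> real) \<Rightarrow> bool" where
  "badline F \<longleftrightarrow> (\<exists>v w. nprop v w \<and> (\<forall>s. F (w + s *\<^sub>R v) = 0))"

lemma badline_infinite:
  assumes "badline F" shows "infinite (proj_real_zeros F)"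
proof
  assume fin: "finite (proj_real_zeros F)"
  obtain v w where np: "nprop v w" and z: "\<And>s. F (w + s *\<^sub>R v) = 0"
    using assms unfolding badline_def by blast
  have v0: "v \<noteq> 0" and nw: "\<And>t. w \<noteq> t *\<^sub>R v" using np unfolding nprop_def by auto
  define g where "g s = {t *\<^sub>R (w + s *\<^sub>R v) | t. True}" for s
  have ne: "w + s *\<^sub>R v \<noteq> 0" for s
  proof
    assume "w + s *\<^sub>R v = 0"
    hence "w = (-s) *\<^sub>R v" by (simp add: algebra_simps eq_neg_iff_add_eq_0)
    with nw show False by blast
  qed
  have sub: "g ` UNIV \<subseteq> proj_real_zeros F"
    unfolding g_def proj_real_zeros_def using ne z by blast
  have inj: "inj g"
  proof (rule injI)
    fix r r' assume "g r = g r'"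
    hence "w + r' *\<^sub>R v \<in> g r" unfolding g_def by (metis (mono_tags, lifting) mem_Collect_eq scaleR_one)
    then obtain t where t: "w + r' *\<^sub>R v = t *\<^sub>R (w + r *\<^sub>R v)" unfolding g_def by blast
    hence e: "(1 - t) *\<^sub>R w = (t*r - r') *\<^sub>R v" by (simp add: algebra_simps)
    show "r = r'"
    proof (cases "t = 1")
      case True
      with e have "(r - r') *\<^sub>R v = 0" by (auto simp: algebra_simps)
      with v0 show ?thesis by simp
    next
      case False
      have "w = (1/(1-t)) *\<^sub>R ((1 - t) *\<^sub>R w)" using False by simp
      also have "\<dots> = ((t*r - r')/(1 - t)) *\<^sub>R v" unfolding e by simp
      finally have "w = ((t*r - r')/(1 - t)) *\<^sub>R v" .
      with nw show ?thesis by blast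
    qed
  qed
  have "infinite (g ` UNIV)"
  proof
    assume "finite (g ` UNIV)"
    hence "finite (UNIV::real set)" using finite_imageD inj by blast
    thus False using infinite_UNIV_char_0 by blast
  qed
  with fin sub show False using finite_subset by blast
qed


lemma dirl:
  fixes a b c :: "real \<Rightarrow> real"
  assumes nn: "\<And>a b c. 0 \<le> FF L a b c"
    and e: "\<And>t. FF L (a t) (b t) (c t) = c0 + c1*t + c2*t^2 + c3*t^3 + c4*t^4"
    and z: "c0 = 0"
  shows "c1 = 0" "0 \<le> c2" "c2 = 0 \<Longrightarrow> c3 = 0"
proof -
  have h: "\<And>t. 0 \<le> c0 + c1*t + c2*t^2 + c3*t^3 + c4*t^4" using nn e by metis
  show "c1 = 0" "0 \<le> c2" "c2 = 0 \<Longrightarrow> c3 = 0" using tpoly[OF h z] by auto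
qed

lemma lemA:
  assumes nn: "\<And>a b c. 0 \<le> FF L a b c" and z: "FF L 1 0 1 = 0"
  shows "FF L (a + s) b (c + s) = FF L a b c"
proof -
  have d1: "\<And>t. FF L (1 + t) 0 1 = (1 * L 0 + 4 * L 2 + 6 * L 4 + 4 * L 6 + 1 * L 8) + (4 * L 2 + 12 * L 4 + 12 * L 6 + 4 * L 8)*t + (6 * L 4 + 12 * L 6 + 6 * L 8)*t^2 + (4 * L 6 + 4 * L 8)*t^3 + (1 * L 8)*t^4"
    unfolding FF_def by (simp add: power2_eq_square power3_eq_cube power4_eq_xxxx algebra_simps)

  have d2: "\<And>t. FF L 1 t 1 = (1 * L 0 + 4 * L 2 + 6 * L 4 + 4 * L 6 + 1 * L 8) + (4 * L 1 + 12 * L 3 + 12 * L 5 + 4 * L 7)*t + (6 * L 2 + 12 * L 4 + 6 * L 6)*t^2 + (4 * L 3 + 4 * L 5)*t^3 + (1 * L 4)*t^4"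
    unfolding FF_def by (simp add: power2_eq_square power3_eq_cube power4_eq_xxxx algebra_simps)

  have d3: "\<And>t. FF L 1 0 (1 + t) = (1 * L 0 + 4 * L 2 + 6 * L 4 + 4 * L 6 + 1 * L 8) + (4 * L 0 + 12 * L 2 + 12 * L 4 + 4 * L 6)*t + (6 * L 0 + 12 * L 2 + 6 * L 4)*t^2 + (4 * L 0 + 4 * L 2)*t^3 + (1 * L 0)*t^4"
    unfolding FF_def by (simp add: power2_eq_square power3_eq_cube power4_eq_xxxx algebra_simps)

  have d4: "\<And>t. FF L (1 + t) 0 (1 - t) = (1 * L 0 + 4 * L 2 + 6 * L 4 + 4 * L 6 + 1 * L 8) + (-4 * L 0 + -8 * L 2 + 8 * L 6 + 4 * L 8)*t + (6 * L 0 + -12 * L 4 + 6 * L 8)*t^2 + (-4 * L 0 + 8 * L 2 + -8 * L 6 + 4 * L 8)*t^3 + (1 * L 0 + -4 * L 2 + 6 * L 4 + -4 * L 6 + 1 * L 8)*t^4"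
    unfolding FF_def by (simp add: power2_eq_square power3_eq_cube power4_eq_xxxx algebra_simps)

  have d5: "\<And>t. FF L (1 + t) t (1 - t) = (1 * L 0 + 4 * L 2 + 6 * L 4 + 4 * L 6 + 1 * L 8) + (-4 * L 0 + 4 * L 1 + -8 * L 2 + 12 * L 3 + 12 * L 5 + 8 * L 6 + 4 * L 7 + 4 * L 8)*t + (6 * L 0 + -12 * L 1 + 6 * L 2 + -12 * L 3 + 12 * L 5 + 6 * L 6 + 12 * L 7 + 6 * L 8)*t^2 + (-4 * L 0 + 12 * L 1 + -4 * L 2 + -8 * L 3 + -8 * L 5 + 4 * L 6 + 12 * L 7 + 4 * L 8)*t^3 + (1 * L 0 + -4 * L 1 + 2 * L 2 + 8 * L 3 + -5 * L 4 + -8 * L 5 + 2 * L 6 + 4 * L 7 + 1 * L 8)*t^4"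
    unfolding FF_def by (simp add: power2_eq_square power3_eq_cube power4_eq_xxxx algebra_simps)

  have d6: "\<And>t. FF L (1 + t) (-t) (1 - t) = (1 * L 0 + 4 * L 2 + 6 * L 4 + 4 * L 6 + 1 * L 8) + (-4 * L 0 + -4 * L 1 + -8 * L 2 + -12 * L 3 + -12 * L 5 + 8 * L 6 + -4 * L 7 + 4 * L 8)*t + (6 * L 0 + 12 * L 1 + 6 * L 2 + 12 * L 3 + -12 * L 5 + 6 * L 6 + -12 * L 7 + 6 * L 8)*t^2 + (-4 * L 0 + -12 * L 1 + -4 * L 2 + 8 * L 3 + 8 * L 5 + 4 * L 6 + -12 * L 7 + 4 * L 8)*t^3 + (1 * L 0 + 4 * L 1 + 2 * L 2 + -8 * L 3 + -5 * L 4 + 8 * L 5 + 2 * L 6 + -4 * L 7 + 1 * L 8)*t^4"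
    unfolding FF_def by (simp add: power2_eq_square power3_eq_cube power4_eq_xxxx algebra_simps)

  have z0: "(1 * L 0 + 4 * L 2 + 6 * L 4 + 4 * L 6 + 1 * L 8) = 0" using z by (simp add: FF_def)
  note r1 = dirl[OF nn d1 z0]
  note r2 = dirl[OF nn d2 z0]
  note r3 = dirl[OF nn d3 z0]
  note r4 = dirl[OF nn d4 z0]
  note r5 = dirl[OF nn d5 z0]
  note r6 = dirl[OF nn d6 z0]
  have M: "L 0 + 2*L 2 + L 4 = 0" "L 1 + 2*L 3 + L 5 = 0" "L 2 + 2*L 4 + L 6 = 0"
      "L 3 + 2*L 5 + L 7 = 0" "L 4 + 2*L 6 + L 8 = 0"
    using r1(1) r2(1) r3(1) r2(2) r4(2) r5(2) r6(2) by linarith+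
  have "(4 * L 6 + 4 * L 8) = 0" using r1(3) M by linarith
  moreover have "(4 * L 3 + 4 * L 5) = 0" using r2(3) M by linarith
  ultimately have E: "L 2 = - L 0" "L 4 = L 0" "L 6 = - L 0" "L 8 = L 0"
     "L 3 = - L 1" "L 5 = L 1" "L 7 = - L 1" using M z0 by linarith+
  show ?thesis unfolding FF_def E
    by (simp add: power2_eq_square power3_eq_cube power4_eq_xxxx algebra_simps)
qed
lemma lemC:
  assumes nn: "\<And>a b c. 0 \<le> FF L a b c" and z1: "FF L 1 0 0 = 0" and z2: "FF L 0 0 1 = 0"
  shows "FF L a b c = 0"
proof -
  have d1: "\<And>t. FF L 1 t 0 = (1 * L 8) + (4 * L 7)*t + (6 * L 6)*t^2 + (4 * L 5)*t^3 + (1 * L 4)*t^4"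
    unfolding FF_def by (simp add: power2_eq_square power3_eq_cube power4_eq_xxxx algebra_simps)

  have d1z: "(1 * L 8) = 0" using z1 by (simp add: FF_def)
  note d1r = dirl[OF nn d1 d1z]
  have d2: "\<And>t. FF L 1 0 t = (1 * L 8) + (4 * L 6)*t + (6 * L 4)*t^2 + (4 * L 2)*t^3 + (1 * L 0)*t^4"
    unfolding FF_def by (simp add: power2_eq_square power3_eq_cube power4_eq_xxxx algebra_simps)

  have d2z: "(1 * L 8) = 0" using z1 by (simp add: FF_def)
  note d2r = dirl[OF nn d2 d2z]
  have d3: "\<And>t. FF L 0 t 1 = (1 * L 0) + (4 * L 1)*t + (6 * L 2)*t^2 + (4 * L 3)*t^3 + (1 * L 4)*t^4"
    unfolding FF_def by (simp add: power2_eq_square power3_eq_cube power4_eq_xxxx algebra_simps)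

  have d3z: "(1 * L 0) = 0" using z2 by (simp add: FF_def)
  note d3r = dirl[OF nn d3 d3z]
  have d4: "\<And>t. FF L t 0 1 = (1 * L 0) + (4 * L 2)*t + (6 * L 4)*t^2 + (4 * L 6)*t^3 + (1 * L 8)*t^4"
    unfolding FF_def by (simp add: power2_eq_square power3_eq_cube power4_eq_xxxx algebra_simps)

  have d4z: "(1 * L 0) = 0" using z2 by (simp add: FF_def)
  note d4r = dirl[OF nn d4 d4z]
  have Z: "L 8 = 0" "L 0 = 0" "L 7 = 0" "L 6 = 0" "L 1 = 0" "L 2 = 0"
    using d1z d3z d1r(1) d2r(1) d3r(1) d4r(1) by linarith+
  have e1: "\<And>t. FF L 1 (y*t) t = 0 + 0*t + (6*L 4 + 12*L 5*y)*t^2 + (4*L 5*y^3 + 12*L 4*y^2 + 12*L 3*y + 0)*t^3 + (L 4*y^4 + 4*L 3*y^3)*t^4" for y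
    unfolding FF_def Z by (simp add: power2_eq_square power3_eq_cube power4_eq_xxxx algebra_simps)
  have e2: "\<And>t. FF L t (y*t) 1 = 0 + 0*t + (6*L 4 + 12*L 3*y)*t^2 + (4*L 3*y^3 + 12*L 4*y^2 + 12*L 5*y)*t^3 + (L 4*y^4 + 4*L 5*y^3)*t^4" for y
    unfolding FF_def Z by (simp add: power2_eq_square power3_eq_cube power4_eq_xxxx algebra_simps)
  have h1: "0 \<le> 6*L 4 + 12*L 5*y" for y using dirl(2)[OF nn e1] by simp
  have h2: "0 \<le> 6*L 4 + 12*L 3*y" for y using dirl(2)[OF nn e2] by simp
  have L5: "L 5 = 0"
  proof (rule ccontr)
    assume "L 5 \<noteq> 0"
    have "0 \<le> 6*L 4 + 12*L 5*(-(L 4 + 1)/(2*L 5))" by (rule h1)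
    also have "\<dots> = -6" using \<open>L 5 \<noteq> 0\<close> by (simp add: field_simps)
    finally show False by simp
  qed
  have L3: "L 3 = 0"
  proof (rule ccontr)
    assume "L 3 \<noteq> 0"
    have "0 \<le> 6*L 4 + 12*L 3*(-(L 4 + 1)/(2*L 3))" by (rule h2)
    also have "\<dots> = -6" using \<open>L 3 \<noteq> 0\<close> by (simp add: field_simps)
    finally show False by simp
  qed
  have "0 \<le> FF L 0 1 0" by (rule nn)
  hence a: "0 \<le> L 4" by (simp add: FF_def)
  have "0 \<le> FF L 1 2 (-1)" by (rule nn)
  hence "0 \<le> -26 * L 4" unfolding FF_def Z L3 L5 by simp
  hence "L 4 = 0" using a by linarith
  thus ?thesis unfolding FF_def Z L3 L5 by simp
qed


lemma core_alg:
  fixes p r K e1 e2 e3 L0 L1 L7 L8 :: real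
  assumes p: "p > 0" and r: "r > 0"
  and h1: "K = 3*r*L8 - 2*L7^2"
  and h2: "-2*K*e1 = 12*r^2"
  and h3: "K*(e1^2 + 2*e2) = 3*p*L8"
  and h4: "-2*K*(e3 + e1*e2) = 24*p*r - 4*L1*L7"
  and h5: "K*(e2^2 + 2*e1*e3) = 3*L0*r"
  and h6: "-2*K*e2*e3 = 12*p^2"
  and h7: "K*e3^2 = 3*L0*p - 2*L1^2"
  shows "2*r*e2 = p"
proof -
  have K: "K \<noteq> 0" using h2 r by auto
  have e2: "e2 \<noteq> 0" using h6 p by auto
  have A: "2*r*L1^2 = p*K*(e2^2+2*e1*e3) - r*K*e3^2" using h5 h7 by algebra
  have B: "2*p*L7^2 = r*K*(e1^2+2*e2) - p*K" using h1 h3 by algebra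
  have C: "4*L1*L7 = 24*p*r + 2*K*(e3+e1*e2)" using h4 by algebra
  have G: "p*r*(24*p*r + 2*K*(e3+e1*e2))^2 = 4*(p*K*(e2^2+2*e1*e3) - r*K*e3^2)*(r*K*(e1^2+2*e2) - p*K)"
  proof -
    have "p*r*(4*L1*L7)^2 = 4*(2*r*L1^2)*(2*p*L7^2)" by algebra
    thus ?thesis unfolding A B C .
  qed
  have e1: "e1 = -6*r^2/K" using h2 K by (simp add: field_simps)
  have e3: "e3 = -6*p^2/(K*e2)" using h6 K e2 by (simp add: field_simps)
  have I: "p^5*(p*r*(24*p*r + 2*K*(e3+e1*e2))^2 - 4*(p*K*(e2^2+2*e1*e3) - r*K*e3^2)*(r*K*(e1^2+2*e2) - p*K))
     = -4*K^2*e2^2*(2*r*e2-p)*(r^3*e3^2+p^3)^2"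
    unfolding e1 e3 using K e2 by (simp add: field_simps) algebra
  have "-4*K^2*e2^2*(2*r*e2-p)*(r^3*e3^2+p^3)^2 = 0" using I G by simp
  moreover have "r^3*e3^2+p^3 > 0" using p r by (simp add: add_nonneg_pos)
  ultimately show ?thesis using K e2 by simp
qed

lemma mono_contra:
  fixes p r K e1 e2 e3 t1 t2 :: real
  assumes p: "p > 0" and r: "r > 0" and K: "K \<noteq> 0"
  and h2: "K*e1 = -6*r^2" and h6: "K*e2*e3 = -6*p^2" and he: "2*r*e2 = p"
  and t: "t1 \<noteq> t2"
  and z1: "t1^3 - e1*t1^2 + e2*t1 - e3 = 0" and z2: "t2^3 - e1*t2^2 + e2*t2 - e3 = 0"
  shows False
proof -
  have e3: "K*e3 = -12*p*r"
  proof -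
    have "2*r*(K*e2*e3) = 2*r*(-6*p^2)" using h6 by simp
    hence "p*(K*e3) = p*(-12*p*r)" using he by algebra
    thus ?thesis using p by (subst (asm) mult_left_cancel) auto
  qed
  have R: "K*t*(2*r*t^2+p) + 12*r^2*(r*t^2+2*p) = 0"
    if "t^3 - e1*t^2 + e2*t - e3 = 0" for t
  proof -
    have "2*r*K*(t^3 - e1*t^2 + e2*t - e3) = 0" using that by simp
    thus ?thesis using h2 e3 he by algebra
  qed
  have "K*((t1-t2)*(2*r^2*t1^2*t2^2 + p*r*(4*t1^2+3*t1*t2+4*t2^2) + 2*p^2)) = 0"
    using R[OF z1] R[OF z2] by algebra
  hence E: "(t1-t2)*(2*r^2*t1^2*t2^2 + p*r*(4*t1^2+3*t1*t2+4*t2^2) + 2*p^2) = 0" using K by simp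
  have q: "0 \<le> 4*t1^2+3*t1*t2+4*t2^2"
  proof -
    have "4*t1^2+3*t1*t2+4*t2^2 = (3/2)*(t1+t2)^2 + (5/2)*t1^2 + (5/2)*t2^2" by algebra
    thus ?thesis by (simp add: add_nonneg_nonneg)
  qed
  have "0 < 2*r^2*t1^2*t2^2 + p*r*(4*t1^2+3*t1*t2+4*t2^2) + 2*p^2"
    using p r q by (simp add: add_nonneg_pos)
  with E t show False by simp
qed



lemma dbl_dvd:
  fixes s :: "real poly"
  assumes "poly s a = 0" "poly (pderiv s) a = 0"
  shows "\<exists>q. s = [:-a,1:]^2 * q"
proof -
  obtain q1 where q1: "s = [:-a,1:] * q1" using assms(1) poly_eq_0_iff_dvd by (metis dvdE)
  have "pderiv s = [:-a,1:] * pderiv q1 + q1 * pderiv [:-a,1:]" unfolding q1 by (rule pderiv_mult)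
  moreover have "pderiv [:-a,1:] = 1" by (simp add: pderiv_pCons)
  ultimately have "poly (pderiv s) a = poly q1 a" by simp
  hence "poly q1 a = 0" using assms(2) by simp
  then obtain q2 where "q1 = [:-a,1:] * q2" using poly_eq_0_iff_dvd by (metis dvdE)
  hence "s = [:-a,1:]^2 * q2" using q1 by (simp only: power2_eq_square mult.assoc)
  thus ?thesis by blast
qed

lemma peel:
  fixes s M q :: "real poly"
  assumes "s = M * q" "poly M b \<noteq> 0" "poly s b = 0" "poly (pderiv s) b = 0"
  shows "poly q b = 0 \<and> poly (pderiv q) b = 0"
proof -
  have q: "poly q b = 0" using assms by simp
  have "pderiv s = M * pderiv q + q * pderiv M" unfolding assms(1) by (rule pderiv_mult)
  hence "poly M b * poly (pderiv q) b = 0" using assms(4) q by simp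
  thus ?thesis using q assms(2) by simp
qed

lemma three_double:
  fixes s :: "real poly"
  assumes s0: "s \<noteq> 0" and deg: "degree s \<le> 6" and d: "t1 \<noteq> t2" "t1 \<noteq> t3" "t2 \<noteq> t3"
    and z1: "poly s t1 = 0" "poly (pderiv s) t1 = 0"
    and z2: "poly s t2 = 0" "poly (pderiv s) t2 = 0"
    and z3: "poly s t3 = 0" "poly (pderiv s) t3 = 0"
  shows "\<exists>K. s = smult K (([:-t1,1:]*[:-t2,1:]*[:-t3,1:])^2)"
proof -
  obtain q1 where q1: "s = [:-t1,1:]^2 * q1" using dbl_dvd[OF z1] by blast
  have "poly q1 t2 = 0 \<and> poly (pderiv q1) t2 = 0"
    by (rule peel[OF q1 _ z2]) (use d in auto)
  then obtain q2 where q2: "q1 = [:-t2,1:]^2 * q2" using dbl_dvd by blast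
  have s2: "s = ([:-t1,1:]^2 * [:-t2,1:]^2) * q2" using q1 q2 by (simp add: mult.assoc)
  have "poly q2 t3 = 0 \<and> poly (pderiv q2) t3 = 0"
    by (rule peel[OF s2 _ z3]) (use d in auto)
  then obtain q3 where q3: "q2 = [:-t3,1:]^2 * q3" using dbl_dvd by blast
  have s3: "s = (([:-t1,1:]*[:-t2,1:]*[:-t3,1:])^2) * q3" using s2 q3 by (simp only: power_mult_distrib mult.assoc)
  have nz: "([:-t1,1:]*[:-t2,1:]*[:-t3,1:])^2 \<noteq> 0" by simp
  have q30: "q3 \<noteq> 0" using s0 s3 by auto
  have dP: "degree (([:-t1,1:]*[:-t2,1:]*[:-t3,1:])^2) = 6"
    by (simp add: degree_mult_eq degree_power_eq)
  have "degree s = 6 + degree q3" unfolding s3 using nz q30 dP by (simp add: degree_mult_eq)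
  hence "degree q3 = 0" using deg by simp
  then obtain K where "q3 = [:K:]" by (metis degree_eq_zeroE)
  hence "s = smult K (([:-t1,1:]*[:-t2,1:]*[:-t3,1:])^2)" using s3 by simp
  thus ?thesis by blast
qed



lemma sextic_case:
  assumes nn: "\<And>a b c. 0 \<le> FF L a b c"
  and L3: "L 3 = 0" and L4: "L 4 = 0" and L5: "L 5 = 0" and p: "L 2 > 0" and r: "L 6 > 0"
  and z1: "FF L t1 b1 1 = 0" and z2: "FF L t2 b2 1 = 0" and z3: "FF L t3 b3 1 = 0"
  and d12: "(t1,b1) \<noteq> (t2,b2)" and d13: "(t1,b1) \<noteq> (t3,b3)" and d23: "(t2,b2) \<noteq> (t3,b3)"
  shows False
proof -
  define A where "A t = 6*(L 2 + L 6*t^2)" for t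
  define B where "B t = 4*(L 1 + L 7*t^3)" for t
  define C where "C t = L 0 + 4*L 2*t + 4*L 6*t^3 + L 8*t^4" for t
  have FFq: "FF L t b 1 = A t * b^2 + B t * b + C t" for t b
    unfolding FF_def A_def B_def C_def L3 L4 L5
    by (simp add: power2_eq_square power3_eq_cube power4_eq_xxxx algebra_simps)
  have Apos: "A t > 0" for t unfolding A_def using p r by (simp add: add_pos_nonneg)
  have nnq: "0 \<le> A t * b^2 + B t * b + C t" for t b using nn[of t b 1] FFq by simp
  define sp where "sp = [:3*L 2*L 0 - 2*(L 1)^2, 12*(L 2)^2, 3*L 6*L 0, 24*L 2*L 6 - 4*L 1*L 7,
      3*L 2*L 8, 12*(L 6)^2, 3*L 6*L 8 - 2*(L 7)^2:]"
  have psp: "8 * poly sp t = 4*A t*C t - (B t)^2" for t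
    unfolding sp_def A_def B_def C_def
    by (simp add: power2_eq_square power3_eq_cube power4_eq_xxxx algebra_simps)
  have spnn: "0 \<le> poly sp t" for t
    using quad_disc[OF Apos nnq, of t] psp[of t] by simp
  have zz: "poly sp t = 0 \<and> b = - B t / (2 * A t)" if "FF L t b 1 = 0" for t b
  proof -
    have z: "A t * b^2 + B t * b + C t = 0" using that FFq by simp
    from quad_zero[OF Apos nnq z] psp[of t] show ?thesis by simp
  qed
  have dt: "t1 \<noteq> t2" "t1 \<noteq> t3" "t2 \<noteq> t3"
    using zz[OF z1] zz[OF z2] zz[OF z3] d12 d13 d23 by auto
  have sp0: "sp \<noteq> 0"
  proof
    assume "sp = 0"
    hence "coeff sp 1 = 0" by simp
    thus False unfolding sp_def using p by simp
  qed
  have degsp: "degree sp \<le> 6"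
    by (rule degree_le) (auto simp: sp_def coeff_pCons split: nat.split)
  have dz: "poly (pderiv sp) t = 0" if "poly sp t = 0" for t
    using poly_min_deriv[OF spnn that] .
  obtain K where sK: "sp = smult K (([:-t1,1:]*[:-t2,1:]*[:-t3,1:])^2)"
    using three_double[OF sp0 degsp dt _ dz _ dz _ dz] zz[OF z1] zz[OF z2] zz[OF z3] by blast
  define e1 where "e1 = t1 + t2 + t3"
  define e2 where "e2 = t1*t2 + t1*t3 + t2*t3"
  define e3 where "e3 = t1*t2*t3"
  have Pe: "[:-t1,1:]*[:-t2,1:]*[:-t3,1:] = [:-e3, e2, -e1, 1:]"
    unfolding e1_def e2_def e3_def by (simp add: algebra_simps)
  have P2: "[:-e3, e2, -e1, 1:]^2 = [:e3^2, -2*e2*e3, e2^2+2*e1*e3, -2*e3-2*e1*e2, e1^2+2*e2, -2*e1, 1:]"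
    by (simp add: power2_eq_square algebra_simps)
  have eqs: "3*L 2*L 0 - 2*(L 1)^2 = K*e3^2" "12*(L 2)^2 = K*(-2*e2*e3)"
     "3*L 6*L 0 = K*(e2^2+2*e1*e3)" "24*L 2*L 6 - 4*L 1*L 7 = K*(-2*e3-2*e1*e2)"
     "3*L 2*L 8 = K*(e1^2+2*e2)" "12*(L 6)^2 = K*(-2*e1)" "3*L 6*L 8 - 2*(L 7)^2 = K"
    using sK unfolding Pe P2 sp_def by simp_all
  have K: "K \<noteq> 0" using eqs(6) r by auto
  have "2*L 6*e2 = L 2"
    by (rule core_alg[of "L 2" "L 6" K "L 8" "L 7" e1 e2 e3 "L 1" "L 0"])
       (use p r eqs in \<open>simp_all add: algebra_simps\<close>)
  moreover have rt: "t^3 - e1*t^2 + e2*t - e3 = 0" if "t = t1 \<or> t = t2" for t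
  proof -
    have "poly ([:-t1,1:]*[:-t2,1:]*[:-t3,1:]) t = (t - t1)*(t - t2)*(t - t3)"
      by (simp add: algebra_simps)
    also have "\<dots> = 0" using that by auto
    finally have "poly ([:-t1,1:]*[:-t2,1:]*[:-t3,1:]) t = 0" .
    hence "poly [:-e3, e2, -e1, 1:] t = 0" unfolding Pe .
    moreover have "poly [:-e3, e2, -e1, 1:] t = t^3 - e1*t^2 + e2*t - e3"
      by (simp add: algebra_simps power2_eq_square power3_eq_cube)
    ultimately show ?thesis by simp
  qed
  ultimately show False
    using mono_contra[OF p r K _ _ _ dt(1) rt rt] eqs by (auto simp: algebra_simps)
qed



lemma quartic_two:
  fixes A B al be ga :: real
  assumes A: "A > 0" and be: "be \<noteq> 0"
  and h: "\<And>t b. 0 \<le> A*b^2 + B*b + (ga + be*t + al*t^4)"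
  and z1: "A*b1^2 + B*b1 + (ga + be*t1 + al*t1^4) = 0"
  and z2: "A*b2^2 + B*b2 + (ga + be*t2 + al*t2^4) = 0"
  shows "t1 = t2 \<and> b1 = b2"
proof -
  define ph where "ph = [:4*A*ga - B^2, 4*A*be, 0, 0, 4*A*al:]"
  have pph: "poly ph t = 4*A*(ga + be*t + al*t^4) - B^2" for t
    unfolding ph_def by (simp add: algebra_simps power2_eq_square power3_eq_cube power4_eq_xxxx)
  have dph: "poly (pderiv ph) t = 4*A*be + 16*A*al*t^3" for t
    unfolding ph_def by (simp add: pderiv_pCons algebra_simps power2_eq_square power3_eq_cube)
  have hh: "\<And>b. 0 \<le> A*b^2 + B*b + (ga + be*t + al*t^4)" for t using h by blast
  have nn: "0 \<le> poly ph t" for t using quad_disc[OF A hh] pph[of t] by simp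
  have q1: "poly ph t1 = 0" "b1 = -B/(2*A)" using quad_zero[OF A hh z1] pph[of t1] by simp_all
  have q2: "poly ph t2 = 0" "b2 = -B/(2*A)" using quad_zero[OF A hh z2] pph[of t2] by simp_all
  have "poly (pderiv ph) t1 = 0" "poly (pderiv ph) t2 = 0"
    using poly_min_deriv[OF nn q1(1)] poly_min_deriv[OF nn q2(1)] by auto
  hence e: "4*A*be + 16*A*al*t1^3 = 0" "4*A*be + 16*A*al*t2^3 = 0" unfolding dph by auto
  have al: "al \<noteq> 0" using e(1) be A by auto
  have "16*A*al*t1^3 = 16*A*al*t2^3" using e by linarith
  hence "t1^3 = t2^3" using al A by simp
  hence "t1 = t2" by (rule cube_inj)
  thus ?thesis using q1 q2 by simp
qed

lemma lin_nn: fixes a b :: real assumes "\<And>t. 0 \<le> a + b*t" shows "b = 0"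
proof (rule ccontr)
  assume b: "b \<noteq> 0"
  have "0 \<le> a + b*((-a-1)/b)" by (rule assms)
  also have "\<dots> = -1" using b by (simp add: field_simps)
  finally show False by simp
qed

lemma np010: "nprop (0,1,0) (a,b,c) \<Longrightarrow> a \<noteq> 0 \<or> c \<noteq> 0"
  unfolding nprop_def by (auto simp: scaleR_prod_def)

lemma np_c: assumes "nprop (a,b,c) (a',b',c')" "c \<noteq> 0" "c' \<noteq> 0"
  shows "(a/c, b/c) \<noteq> (a'/c', b'/c')"
proof
  assume e: "(a/c, b/c) = (a'/c', b'/c')"
  have "(a',b',c') = (c'/c) *\<^sub>R (a,b,c)"
    using e assms(2,3) by (auto simp: field_simps)
  thus False using assms(1) unfolding nprop_def by blast
qed

lemma np_a: assumes "nprop (a,b,c) (a',b',c')" "a \<noteq> 0" "a' \<noteq> 0"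
  shows "(c/a, b/a) \<noteq> (c'/a', b'/a')"
proof
  assume e: "(c/a, b/a) = (c'/a', b'/a')"
  have "(a',b',c') = (a'/a) *\<^sub>R (a,b,c)"
    using e assms(2,3) by (auto simp: field_simps)
  thus False using assms(1) unfolding nprop_def by blast
qed

lemma badline_FF:
  assumes "nprop (x1,y1,z1) (x2,y2,z2)" "\<And>s. FF L (x2 + s*x1) (y2 + s*y1) (z2 + s*z1) = 0"
  shows "badline (Fquart L)"
  unfolding badline_def
  apply (rule exI[of _ "(x1,y1,z1)"], rule exI[of _ "(x2,y2,z2)"])
  using assms by (simp add: Fquart_FF)

lemma FF_norma: "a \<noteq> 0 \<Longrightarrow> FF L a b c = a^4 * FF L 1 (b/a) (c/a)"
  using FF_hom[of L a 1 "b/a" "c/a"] by simp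

lemma lemB:
  assumes nn: "\<And>a b c. 0 \<le> FF L a b c" and z0: "FF L 0 1 0 = 0"
  and z1: "FF L a1 b1 c1 = 0" and z2: "FF L a2 b2 c2 = 0" and z3: "FF L a3 b3 c3 = 0"
  and n1: "nprop (0,1,0) (a1,b1,c1)" and n2: "nprop (0,1,0) (a2,b2,c2)" and n3: "nprop (0,1,0) (a3,b3,c3)"
  and n12: "nprop (a1,b1,c1) (a2,b2,c2)" and n13: "nprop (a1,b1,c1) (a3,b3,c3)"
  and n23: "nprop (a2,b2,c2) (a3,b3,c3)"
  shows "badline (Fquart L)"
proof -
  have L4: "L 4 = 0" using z0 by (simp add: FF_def)
  have dA: "\<And>t. FF L t 1 0 = (1 * L 4) + (4 * L 5)*t + (6 * L 6)*t^2 + (4 * L 7)*t^3 + (1 * L 8)*t^4"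
    unfolding FF_def by (simp add: power2_eq_square power3_eq_cube power4_eq_xxxx algebra_simps)
  have dB: "\<And>t. FF L 0 1 t = (1 * L 4) + (4 * L 3)*t + (6 * L 2)*t^2 + (4 * L 1)*t^3 + (1 * L 0)*t^4"
    unfolding FF_def by (simp add: power2_eq_square power3_eq_cube power4_eq_xxxx algebra_simps)
  have "1 * L 4 = 0" using L4 by simp
  note rA = dirl[OF nn dA this] and rB = dirl[OF nn dB this]
  have L5: "L 5 = 0" and L3: "L 3 = 0" and L6: "L 6 \<ge> 0" and L2: "L 2 \<ge> 0"
    using rA rB by auto
  have n1': "a1 \<noteq> 0 \<or> c1 \<noteq> 0" "a2 \<noteq> 0 \<or> c2 \<noteq> 0" "a3 \<noteq> 0 \<or> c3 \<noteq> 0"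
    using np010 n1 n2 n3 by auto
  consider "L 2 = 0 \<and> L 6 = 0" | "L 2 > 0 \<and> L 6 = 0" | "L 2 = 0 \<and> L 6 > 0" | "L 2 > 0 \<and> L 6 > 0"
    using L2 L6 by linarith
  thus ?thesis
  proof cases
    case 1
    have e1: "FF L 0 t 1 = L 0 + (4*L 1)*t" for t unfolding FF_def using 1 L3 L4 L5 by simp
    have L1: "L 1 = 0"
    proof -
      have "4*L 1 = 0" by (rule lin_nn[of "L 0"], metis nn e1)
      thus ?thesis by simp
    qed
    have e2: "FF L 1 t 0 = L 8 + (4*L 7)*t" for t unfolding FF_def using 1 L3 L4 L5 by simp
    have L7: "L 7 = 0"
    proof -
      have "4*L 7 = 0" by (rule lin_nn[of "L 8"], metis nn e2)
      thus ?thesis by simp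
    qed
    have F: "FF L a b c = L 0 * c^4 + L 8 * a^4" for a b c unfolding FF_def using 1 L1 L3 L4 L5 L7 by simp
    show ?thesis by (rule badline_FF[OF n1]) (use z1 F in simp)
  next
    case 2
    have e2: "FF L 1 t 0 = L 8 + (4*L 7)*t" for t unfolding FF_def using 2 L3 L4 L5 by simp
    have L7: "L 7 = 0"
    proof -
      have "4*L 7 = 0" by (rule lin_nn[of "L 8"], metis nn e2)
      thus ?thesis by simp
    qed
    have F0: "FF L a b 0 = L 8 * a^4" for a b unfolding FF_def using 2 L3 L4 L5 L7 by simp
    show ?thesis
    proof (cases "c1 = 0 \<or> c2 = 0")
      case True
      hence "L 8 = 0" using F0 z1 z2 n1' by auto
      thus ?thesis using F0 by (intro badline_FF[of 0 1 0 1 0 0]) (auto simp: nprop_def scaleR_prod_def zero_prod_def)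
    next
      case False
      have Fq: "FF L t b 1 = (6*L 2)*b^2 + (4*L 1)*b + (L 0 + (4*L 2)*t + L 8*t^4)" for t b
        unfolding FF_def using 2 L3 L4 L5 L7 by (simp add: algebra_simps)
      have "a1/c1 = a2/c2 \<and> b1/c1 = b2/c2"
        apply (rule quartic_two[of "6*L 2" "4*L 2" "4*L 1" "L 0" "L 8"])
        using 2 apply simp
        using 2 apply simp
        using nn Fq apply metis
        using z1 z2 False FF_norm[of c1 L a1 b1] FF_norm[of c2 L a2 b2] Fq by auto
      thus ?thesis using np_c[OF n12] False by auto
    qed
  next
    case 3
    have e1: "FF L 0 t 1 = L 0 + (4*L 1)*t" for t unfolding FF_def using 3 L3 L4 L5 by simp
    have L1: "L 1 = 0"
    proof -
      have "4*L 1 = 0" by (rule lin_nn[of "L 0"], metis nn e1)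
      thus ?thesis by simp
    qed
    have F0: "FF L 0 b c = L 0 * c^4" for b c unfolding FF_def using 3 L1 L3 L4 L5 by simp
    show ?thesis
    proof (cases "a1 = 0 \<or> a2 = 0")
      case True
      hence "L 0 = 0" using F0 z1 z2 n1' by auto
      thus ?thesis using F0 by (intro badline_FF[of 0 1 0 0 0 1]) (auto simp: nprop_def scaleR_prod_def zero_prod_def)
    next
      case False
      have Fq: "FF L 1 b t = (6*L 6)*b^2 + (4*L 7)*b + (L 8 + (4*L 6)*t + L 0*t^4)" for t b
        unfolding FF_def using 3 L1 L3 L4 L5 by (simp add: algebra_simps)
      have "c1/a1 = c2/a2 \<and> b1/a1 = b2/a2"
        apply (rule quartic_two[of "6*L 6" "4*L 6" "4*L 7" "L 8" "L 0"])
        using 3 apply simp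
        using 3 apply simp
        using nn Fq apply metis
        using z1 z2 False FF_norma[of a1 L b1 c1] FF_norma[of a2 L b2 c2] Fq by auto
      thus ?thesis using np_a[OF n12] False by auto
    qed
  next
    case 4
    have Fb: "FF L 1 be u = (6*L 6*be^2 + 4*L 7*be + L 8) + (4*L 6)*u + (6*L 2*be^2)*u^2
        + (4*L 1*be + 4*L 2)*u^3 + L 0*u^4" for be u
      unfolding FF_def using L3 L4 L5 by (simp add: power2_eq_square power3_eq_cube power4_eq_xxxx algebra_simps)
    have cnz: "c \<noteq> 0" if "FF L a b c = 0" "a \<noteq> 0 \<or> c \<noteq> 0" for a b c
    proof
      assume c: "c = 0"
      hence a: "a \<noteq> 0" using that by simp
      have "FF L 1 (b/a) 0 = 0" using that(1) c FF_norma[OF a, of L b c] a by simp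
      hence "6*L 6*(b/a)^2 + 4*L 7*(b/a) + L 8 = 0" using Fb[of "b/a" 0] by simp
      from dirl(1)[OF nn Fb this] 4 show False by simp
    qed
    have c: "c1 \<noteq> 0" "c2 \<noteq> 0" "c3 \<noteq> 0" using cnz z1 z2 z3 n1' by auto
    show ?thesis
    proof (rule FalseE, rule sextic_case[OF nn L3 L4 L5])
      show "L 2 > 0" "L 6 > 0" using 4 by auto
      show "FF L (a1/c1) (b1/c1) 1 = 0" "FF L (a2/c2) (b2/c2) 1 = 0" "FF L (a3/c3) (b3/c3) 1 = 0"
        using z1 z2 z3 c FF_norm[of c1 L a1 b1] FF_norm[of c2 L a2 b2] FF_norm[of c3 L a3 b3] by auto
      show "(a1/c1, b1/c1) \<noteq> (a2/c2, b2/c2)" "(a1/c1, b1/c1) \<noteq> (a3/c3, b3/c3)"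
        "(a2/c2, b2/c2) \<noteq> (a3/c3, b3/c3)" using np_c n12 n13 n23 c by auto
    qed
  qed
qed



definition Tm :: "real \<Rightarrow> real \<Rightarrow> real \<Rightarrow> real \<Rightarrow> real\<times>real\<times>real \<Rightarrow> real\<times>real\<times>real" where
 "Tm u0 u1 w0 w1 = (\<lambda>(x,y,z). (x*u1^2 + y*u1*w1 + z*w1^2,
     2*x*u0*u1 + y*(u0*w1+u1*w0) + 2*z*w0*w1, x*u0^2 + y*u0*w0 + z*w0^2))"

definition Sm :: "real \<Rightarrow> real \<Rightarrow> real \<Rightarrow> real \<Rightarrow> real\<times>real\<times>real \<Rightarrow> real\<times>real\<times>real" where
 "Sm u0 u1 w0 w1 = (\<lambda>(a,b,c). ((a*w0^2 - b*w0*w1 + c*w1^2)/(u1*w0 - u0*w1)^2,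
     (-2*a*u0*w0 + b*(u1*w0+u0*w1) - 2*c*u1*w1)/(u1*w0 - u0*w1)^2,
     (a*u0^2 - b*u0*u1 + c*u1^2)/(u1*w0 - u0*w1)^2))"

definition lam :: "(nat\<Rightarrow>real) \<Rightarrow> real \<Rightarrow> real \<Rightarrow> real \<Rightarrow> real \<Rightarrow> nat \<Rightarrow> real" where
 "lam L u0 u1 w0 w1 = (\<lambda>m. ell L ([:u0,u1:]^m * [:w0,w1:]^(8-m)))"

lemma FF_trans: "FF (lam L u0 u1 w0 w1) x y z = (case Tm u0 u1 w0 w1 (x,y,z) of (a,b,c) \<Rightarrow> FF L a b c)"
proof -
  obtain a b c where abc: "Tm u0 u1 w0 w1 (x,y,z) = (a,b,c)" by (metis prod_cases3)
  have q: "[:c,b,a:] = [:x:]*[:u0,u1:]^2 + [:y:]*[:u0,u1:]*[:w0,w1:] + [:z:]*[:w0,w1:]^2"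
    using abc by (simp add: Tm_def power2_eq_square algebra_simps)
  have "FF L a b c = ell L ([:c,b,a:]^4)" by (simp add: ell_FF)
  also have "\<dots> = FF (lam L u0 u1 w0 w1) x y z" unfolding q ell_quart lam_def ..
  finally show ?thesis using abc by simp
qed

lemma Fq_trans: "Fquart (lam L u0 u1 w0 w1) v = Fquart L (Tm u0 u1 w0 w1 v)"
proof -
  obtain x y z where v: "v = (x,y,z)" by (metis prod_cases3)
  obtain a b c where abc: "Tm u0 u1 w0 w1 (x,y,z) = (a,b,c)" by (metis prod_cases3)
  show ?thesis using FF_trans[of L u0 u1 w0 w1 x y z] abc unfolding v by (simp add: Fquart_FF)
qed

lemma TS: assumes "u1*w0 - u0*w1 \<noteq> 0" shows "Tm u0 u1 w0 w1 (Sm u0 u1 w0 w1 v) = v"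
proof -
  obtain a b c where v: "v = (a,b,c)" by (metis prod_cases3)
  have d2: "(u1*w0 - u0*w1)^2 \<noteq> 0" using assms by simp
  show ?thesis unfolding v Tm_def Sm_def using d2
    by (simp add: field_simps) algebra
qed

lemma ST: assumes "u1*w0 - u0*w1 \<noteq> 0" shows "Sm u0 u1 w0 w1 (Tm u0 u1 w0 w1 v) = v"
proof -
  obtain a b c where v: "v = (a,b,c)" by (metis prod_cases3)
  have d2: "(u1*w0 - u0*w1)^2 \<noteq> 0" using assms by simp
  show ?thesis unfolding v Tm_def Sm_def using d2
    by (simp add: field_simps) algebra
qed

lemma T_add: "Tm u0 u1 w0 w1 (v + v') = Tm u0 u1 w0 w1 v + Tm u0 u1 w0 w1 v'"
  by (cases v, cases v') (simp add: Tm_def algebra_simps)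

lemma T_scale: "Tm u0 u1 w0 w1 (k *\<^sub>R v) = k *\<^sub>R Tm u0 u1 w0 w1 v"
  by (cases v) (simp add: Tm_def algebra_simps)

lemma T_zero: "Tm u0 u1 w0 w1 0 = 0"
  by (simp add: Tm_def zero_prod_def)



lemma Fq_hom: "Fquart L (k *\<^sub>R v) = k^4 * Fquart L v"
  by (cases v) (simp add: Fquart_FF FF_hom)

lemma nprop_sym: assumes "nprop v w" shows "nprop w v"
proof -
  have v0: "v \<noteq> 0" and nw: "\<And>t. w \<noteq> t *\<^sub>R v" using assms unfolding nprop_def by auto
  have w0: "w \<noteq> 0" using nw[of 0] by simp
  have "v \<noteq> t *\<^sub>R w" for t
  proof
    assume e: "v = t *\<^sub>R w"
    hence t: "t \<noteq> 0" using v0 by auto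
    hence "w = (1/t) *\<^sub>R v" using e by simp
    with nw show False by blast
  qed
  thus ?thesis using w0 unfolding nprop_def by blast
qed

lemma nprop_scale: assumes "k \<noteq> 0" "nprop v w" shows "nprop (k *\<^sub>R v) w"
proof -
  have "v \<noteq> 0" "\<And>t. w \<noteq> t *\<^sub>R v" using assms(2) unfolding nprop_def by auto
  moreover have "w \<noteq> t *\<^sub>R (k *\<^sub>R v)" for t using calculation(2)[of "t*k"] by simp
  ultimately show ?thesis using assms(1) unfolding nprop_def by auto
qed

lemma nprop_S:
  assumes d: "u1*w0 - u0*w1 \<noteq> 0" and n: "nprop z z'"
  shows "nprop (Sm u0 u1 w0 w1 z) (Sm u0 u1 w0 w1 z')"
proof -
  let ?S = "Sm u0 u1 w0 w1" and ?T = "Tm u0 u1 w0 w1"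
  have z0: "z \<noteq> 0" and nz: "\<And>t. z' \<noteq> t *\<^sub>R z" using n unfolding nprop_def by auto
  have "?S z \<noteq> 0"
  proof
    assume "?S z = 0"
    hence "?T (?S z) = 0" by (simp add: T_zero)
    with TS[OF d] z0 show False by simp
  qed
  moreover have "?S z' \<noteq> t *\<^sub>R ?S z" for t
  proof
    assume "?S z' = t *\<^sub>R ?S z"
    hence "?T (?S z') = t *\<^sub>R ?T (?S z)" by (simp add: T_scale)
    hence "z' = t *\<^sub>R z" by (simp add: TS[OF d])
    with nz show False by blast
  qed
  ultimately show ?thesis unfolding nprop_def by blast
qed

lemma badline_T:
  assumes d: "u1*w0 - u0*w1 \<noteq> 0" and b: "badline (Fquart (lam L u0 u1 w0 w1))"
  shows "badline (Fquart L)"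
proof -
  let ?S = "Sm u0 u1 w0 w1" and ?T = "Tm u0 u1 w0 w1"
  obtain v w where n: "nprop v w" and z: "\<And>s. Fquart (lam L u0 u1 w0 w1) (w + s *\<^sub>R v) = 0"
    using b unfolding badline_def by blast
  have "nprop (?S (?T v)) (?S (?T w))" using n by (simp add: ST[OF d])
  hence n2: "nprop (?T v) (?T w)"
  proof -
    have v0: "?T v \<noteq> 0"
    proof
      assume "?T v = 0"
      hence "?S (?T v) = ?S 0" by simp
      hence "v = ?S 0" by (simp add: ST[OF d])
      moreover have "?S 0 = 0" by (simp add: Sm_def zero_prod_def)
      ultimately show False using n unfolding nprop_def by simp
    qed
    moreover have "?T w \<noteq> t *\<^sub>R ?T v" for t
    proof
      assume "?T w = t *\<^sub>R ?T v"
      hence "?T w = ?T (t *\<^sub>R v)" by (simp add: T_scale)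
      hence "?S (?T w) = ?S (?T (t *\<^sub>R v))" by simp
      hence "w = t *\<^sub>R v" by (simp add: ST[OF d])
      with n show False unfolding nprop_def by blast
    qed
    ultimately show ?thesis unfolding nprop_def by blast
  qed
  have "Fquart L (?T w + s *\<^sub>R ?T v) = 0" for s
    using z[of s] by (simp add: Fq_trans T_add T_scale)
  thus ?thesis unfolding badline_def using n2 by blast
qed

lemma nn_lam: assumes "in_dual_cone L" shows "0 \<le> FF (lam L u0 u1 w0 w1) a b c"
proof -
  obtain x y z where e: "Tm u0 u1 w0 w1 (a,b,c) = (x,y,z)" by (metis prod_cases3)
  have "FF (lam L u0 u1 w0 w1) a b c = Fquart L (x,y,z)"
    using Fq_trans[of L u0 u1 w0 w1 "(a,b,c)"] e by (simp add: Fquart_FF)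
  thus ?thesis using dual_nn[OF assms] by (simp add: Fquart_FF)
qed

lemma clA:
  fixes a b c :: real
  assumes "b^2 - 4*a*c < 0"
  shows "\<exists>u0 u1 w0 w1 k. u1*w0 - u0*w1 \<noteq> 0 \<and> k \<noteq> 0 \<and> Tm u0 u1 w0 w1 (1,0,1) = k *\<^sub>R (a,b,c)"
proof -
  have a: "a \<noteq> 0" using assms by (cases "a = 0") auto
  define m where "m = (4*a*c - b^2)/(4*a^2)"
  have m: "m > 0" unfolding m_def using assms a by (simp add: divide_pos_pos)
  define w0 where "w0 = sqrt m"
  have w0: "w0 > 0" "w0^2 = m" unfolding w0_def using m by auto
  have "Tm (b/(2*a)) 1 w0 0 (1,0,1) = (1/a) *\<^sub>R (a,b,c)"
    unfolding Tm_def using a w0(2) by (simp add: m_def field_simps power2_eq_square)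
  moreover have "1 * w0 - b/(2*a) * 0 \<noteq> 0" using w0 by simp
  ultimately show ?thesis using a by (intro exI[of _ "b/(2*a)"] exI[of _ 1] exI[of _ w0] exI[of _ 0] exI[of _ "1/a"]) auto
qed

lemma clB:
  fixes a b c :: real
  assumes D: "b^2 - 4*a*c > 0"
  shows "\<exists>u0 u1 w0 w1. u1*w0 - u0*w1 \<noteq> 0 \<and> Tm u0 u1 w0 w1 (0,1,0) = (a,b,c)"
proof (cases "a = 0")
  case True
  hence b: "b \<noteq> 0" using D by auto
  have "Tm c b 1 0 (0,1,0) = (a,b,c)" unfolding Tm_def using True by simp
  moreover have "b*1 - c*0 \<noteq> 0" using b by simp
  ultimately show ?thesis by blast
next
  case False
  define s where "s = sqrt (b^2 - 4*a*c)"
  have s: "s > 0" "s^2 = b^2 - 4*a*c" unfolding s_def using D by auto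
  define rp where "rp = (-b + s)/(2*a)"
  define rm where "rm = (-b - s)/(2*a)"
  have "Tm (-a*rp) a (-rm) 1 (0,1,0) = (a,b,c)"
    unfolding Tm_def rp_def rm_def using False s(2)
    by (simp add: field_simps power2_eq_square) algebra
  moreover have "a*(-rm) - (-a*rp)*1 \<noteq> 0" unfolding rp_def rm_def using False s(1)
    by (simp add: field_simps)
  ultimately show ?thesis by blast
qed

lemma clC:
  fixes a b c :: real
  assumes D: "b^2 = 4*a*c" and nz: "(a,b,c) \<noteq> 0"
  shows "\<exists>u0 u1 k. k \<noteq> 0 \<and> (a,b,c) = k *\<^sub>R (u1^2, 2*u0*u1, u0^2)"
proof (cases "a = 0")
  case True
  hence "b = 0" using D by simp
  hence "c \<noteq> 0" using nz True by (simp add: zero_prod_def)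
  moreover have "(a,b,c) = c *\<^sub>R (0^2, 2*1*0, 1^2)" using True \<open>b = 0\<close> by simp
  ultimately show ?thesis by blast
next
  case False
  have "(a,b,c) = a *\<^sub>R (1^2, 2*(b/(2*a))*1, (b/(2*a))^2)"
    using False D by (simp add: field_simps power2_eq_square)
  thus ?thesis using False by blast
qed



lemma caseA:
  assumes L: "in_dual_cone L" and z: "Fquart L (a,b,c) = 0" and z': "Fquart L z' = 0"
    and n: "nprop (a,b,c) z'" and D: "b^2 - 4*a*c < 0"
  shows "badline (Fquart L)"
proof -
  obtain u0 u1 w0 w1 k where d: "u1*w0 - u0*w1 \<noteq> 0" and k: "k \<noteq> 0"
    and T: "Tm u0 u1 w0 w1 (1,0,1) = k *\<^sub>R (a,b,c)" using clA[OF D] by blast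
  let ?l = "lam L u0 u1 w0 w1" and ?S = "Sm u0 u1 w0 w1" and ?T = "Tm u0 u1 w0 w1"
  have nn: "\<And>a b c. 0 \<le> FF ?l a b c" using nn_lam[OF L] by blast
  have "Fquart ?l (1,0,1) = 0" unfolding Fq_trans T Fq_hom z by simp
  hence z0: "FF ?l 1 0 1 = 0" by (simp add: Fquart_FF)
  obtain p q r where y: "?S z' = (p,q,r)" by (metis prod_cases3)
  have "Fquart ?l (p,q,r) = 0" unfolding y[symmetric] Fq_trans TS[OF d] by (rule z')
  hence zy: "FF ?l p q r = 0" by (simp add: Fquart_FF)
  have "nprop (?S (k *\<^sub>R (a,b,c))) (?S z')" by (rule nprop_S[OF d nprop_scale[OF k n]])
  hence ny: "nprop (1,0,1) (p,q,r)" unfolding T[symmetric] ST[OF d] y .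
  have "badline (Fquart ?l)"
    by (rule badline_FF[OF ny]) (simp add: lemA[OF nn z0] zy)
  thus ?thesis by (rule badline_T[OF d])
qed

lemma caseC:
  assumes L: "in_dual_cone L" and z: "Fquart L (a,b,c) = 0" and z': "Fquart L (a',b',c') = 0"
    and n: "nprop (a,b,c) (a',b',c')" and D: "b^2 = 4*a*c" and D': "b'^2 = 4*a'*c'"
  shows "badline (Fquart L)"
proof -
  have nz: "(a,b,c) \<noteq> 0" and nz': "(a',b',c') \<noteq> 0" using n nprop_sym[OF n] unfolding nprop_def by auto
  obtain u0 u1 k where k: "k \<noteq> 0" and e: "(a,b,c) = k *\<^sub>R (u1^2, 2*u0*u1, u0^2)"
    using clC[OF D nz] by blast
  obtain w0 w1 k' where k': "k' \<noteq> 0" and e': "(a',b',c') = k' *\<^sub>R (w1^2, 2*w0*w1, w0^2)"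
    using clC[OF D' nz'] by blast
  have d: "u1*w0 - u0*w1 \<noteq> 0"
  proof
    assume d0: "u1*w0 - u0*w1 = 0"
    have "\<exists>mu. w0 = mu*u0 \<and> w1 = mu*u1"
    proof (cases "u1 = 0")
      case True
      hence "u0 \<noteq> 0" using nz e by (auto simp: zero_prod_def)
      thus ?thesis using True d0 by (intro exI[of _ "w0/u0"]) auto
    next
      case False
      thus ?thesis using d0 by (intro exI[of _ "w1/u1"]) (auto simp: field_simps)
    qed
    then obtain mu where mu: "w0 = mu*u0" "w1 = mu*u1" by blast
    have "(a',b',c') = (k'*mu^2/k) *\<^sub>R (a,b,c)"
      unfolding e e' mu using k by (simp add: field_simps power2_eq_square)
    thus False using n unfolding nprop_def by blast
  qed
  let ?l = "lam L u0 u1 w0 w1" and ?T = "Tm u0 u1 w0 w1"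
  have nn: "\<And>a b c. 0 \<le> FF ?l a b c" using nn_lam[OF L] by blast
  have T1: "?T (1,0,0) = (1/k) *\<^sub>R (a,b,c)" unfolding e Tm_def using k by simp
  have T2: "?T (0,0,1) = (1/k') *\<^sub>R (a',b',c')" unfolding e' Tm_def using k' by simp
  have "Fquart ?l (1,0,0) = 0" unfolding Fq_trans T1 Fq_hom z by simp
  hence z1: "FF ?l 1 0 0 = 0" by (simp add: Fquart_FF)
  have "Fquart ?l (0,0,1) = 0" unfolding Fq_trans T2 Fq_hom z' by simp
  hence z2: "FF ?l 0 0 1 = 0" by (simp add: Fquart_FF)
  have "badline (Fquart ?l)"
    by (rule badline_FF[of 0 1 0 1 0 0]) (auto simp: nprop_def zero_prod_def lemC[OF nn z1 z2])
  thus ?thesis by (rule badline_T[OF d])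
qed

lemma caseB:
  assumes L: "in_dual_cone L" and z: "Fquart L (a,b,c) = 0" and D: "b^2 - 4*a*c > 0"
    and z1: "Fquart L x1 = 0" and z2: "Fquart L x2 = 0" and z3: "Fquart L x3 = 0"
    and n1: "nprop (a,b,c) x1" and n2: "nprop (a,b,c) x2" and n3: "nprop (a,b,c) x3"
    and n12: "nprop x1 x2" and n13: "nprop x1 x3" and n23: "nprop x2 x3"
  shows "badline (Fquart L)"
proof -
  obtain u0 u1 w0 w1 where d: "u1*w0 - u0*w1 \<noteq> 0" and T: "Tm u0 u1 w0 w1 (0,1,0) = (a,b,c)"
    using clB[OF D] by blast
  let ?l = "lam L u0 u1 w0 w1" and ?S = "Sm u0 u1 w0 w1" and ?T = "Tm u0 u1 w0 w1"
  have nn: "\<And>a b c. 0 \<le> FF ?l a b c" using nn_lam[OF L] by blast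
  have "Fquart ?l (0,1,0) = 0" unfolding Fq_trans T by (rule z)
  hence z0: "FF ?l 0 1 0 = 0" by (simp add: Fquart_FF)
  have S0: "?S (a,b,c) = (0,1,0)" unfolding T[symmetric] ST[OF d] ..
  obtain p1 q1 r1 where y1: "?S x1 = (p1,q1,r1)" by (metis prod_cases3)
  obtain p2 q2 r2 where y2: "?S x2 = (p2,q2,r2)" by (metis prod_cases3)
  obtain p3 q3 r3 where y3: "?S x3 = (p3,q3,r3)" by (metis prod_cases3)
  have "Fquart ?l (p1,q1,r1) = 0" unfolding y1[symmetric] Fq_trans TS[OF d] by (rule z1)
  moreover have "Fquart ?l (p2,q2,r2) = 0" unfolding y2[symmetric] Fq_trans TS[OF d] by (rule z2)
  moreover have "Fquart ?l (p3,q3,r3) = 0" unfolding y3[symmetric] Fq_trans TS[OF d] by (rule z3)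
  ultimately have zy: "FF ?l p1 q1 r1 = 0" "FF ?l p2 q2 r2 = 0" "FF ?l p3 q3 r3 = 0"
    by (simp_all add: Fquart_FF)
  have ny: "nprop (0,1,0) (p1,q1,r1)" "nprop (0,1,0) (p2,q2,r2)" "nprop (0,1,0) (p3,q3,r3)"
    "nprop (p1,q1,r1) (p2,q2,r2)" "nprop (p1,q1,r1) (p3,q3,r3)" "nprop (p2,q2,r2) (p3,q3,r3)"
    using nprop_S[OF d n1] nprop_S[OF d n2] nprop_S[OF d n3]
      nprop_S[OF d n12] nprop_S[OF d n13] nprop_S[OF d n23] S0 y1 y2 y3 by simp_all
  have "badline (Fquart ?l)" by (rule lemB[OF nn z0 zy ny])
  thus ?thesis by (rule badline_T[OF d])
qed

lemma key4:
  assumes L: "in_dual_cone L"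
    and z: "Fquart L z1 = 0" "Fquart L z2 = 0" "Fquart L z3 = 0" "Fquart L z4 = 0"
    and n: "nprop z1 z2" "nprop z1 z3" "nprop z1 z4" "nprop z2 z3" "nprop z2 z4" "nprop z3 z4"
  shows "badline (Fquart L)"
proof -
  define disc :: "real\<times>real\<times>real \<Rightarrow> real" where "disc = (\<lambda>(a,b,c). b^2 - 4*a*c)"
  have A: "badline (Fquart L)" if "Fquart L x = 0" "Fquart L y = 0" "nprop x y" "disc x < 0" for x y
    using caseA[OF L, of "fst x" "fst (snd x)" "snd (snd x)" y] that by (cases x) (auto simp: disc_def)
  have B: "badline (Fquart L)" if "Fquart L x = 0" "disc x > 0" "Fquart L x1 = 0" "Fquart L x2 = 0"
    "Fquart L x3 = 0" "nprop x x1" "nprop x x2" "nprop x x3" "nprop x1 x2" "nprop x1 x3" "nprop x2 x3"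
    for x x1 x2 x3
    using caseB[OF L, of "fst x" "fst (snd x)" "snd (snd x)" x1 x2 x3] that by (cases x) (auto simp: disc_def)
  have C: "badline (Fquart L)" if "Fquart L x = 0" "Fquart L y = 0" "nprop x y" "disc x = 0" "disc y = 0" for x y
    using caseC[OF L, of "fst x" "fst (snd x)" "snd (snd x)" "fst y" "fst (snd y)" "snd (snd y)"] that
    by (cases x, cases y) (auto simp: disc_def)
  note s = nprop_sym
  show ?thesis
  proof (cases "disc z1 < 0 \<or> disc z2 < 0 \<or> disc z3 < 0 \<or> disc z4 < 0")
    case True
    thus ?thesis using A[OF z(1) z(2) n(1)] A[OF z(2) z(1) s[OF n(1)]]
      A[OF z(3) z(1) s[OF n(2)]] A[OF z(4) z(1) s[OF n(3)]] by blast
  next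
    case False
    show ?thesis
    proof (cases "disc z1 > 0 \<or> disc z2 > 0 \<or> disc z3 > 0 \<or> disc z4 > 0")
      case True
      thus ?thesis
        using B[OF z(1) _ z(2) z(3) z(4) n(1) n(2) n(3) n(4) n(5) n(6)]
          B[OF z(2) _ z(1) z(3) z(4) s[OF n(1)] n(4) n(5) n(2) n(3) n(6)]
          B[OF z(3) _ z(1) z(2) z(4) s[OF n(2)] s[OF n(4)] n(6) n(1) n(3) n(5)]
          B[OF z(4) _ z(1) z(2) z(3) s[OF n(3)] s[OF n(5)] s[OF n(6)] n(1) n(2) n(4)]
        by blast
    next
      case False2: False
      hence "disc z1 = 0" "disc z2 = 0" using False by linarith+
      thus ?thesis using C[OF z(1) z(2) n(1)] by blast
    qed
  qed
qed

lemma line_nprop: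
  assumes "v \<noteq> 0" "w \<noteq> 0" "{t *\<^sub>R v | t. True} \<noteq> {t *\<^sub>R w | t. True}"
  shows "nprop v w"
proof -
  have "w \<noteq> k *\<^sub>R v" for k
  proof
    assume e: "w = k *\<^sub>R v"
    hence k: "k \<noteq> 0" using assms(2) by auto
    have "{t *\<^sub>R v | t. True} = {t *\<^sub>R w | t. True}"
    proof (rule set_eqI, rule iffI)
      fix x assume "x \<in> {t *\<^sub>R v | t. True}"
      then obtain t where "x = t *\<^sub>R v" by blast
      hence "x = (t/k) *\<^sub>R w" using e k by simp
      thus "x \<in> {t *\<^sub>R w | t. True}" by blast
    next
      fix x assume "x \<in> {t *\<^sub>R w | t. True}"
      then obtain t where "x = t *\<^sub>R w" by blast
      hence "x = (t*k) *\<^sub>R v" using e by simp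
      thus "x \<in> {t *\<^sub>R v | t. True}" by blast
    qed
    with assms(3) show False by blast
  qed
  thus ?thesis using assms(1) unfolding nprop_def by blast
qed

theorem mainTheorem12:
  fixes L :: "nat \<Rightarrow> real"
  assumes "in_dual_cone L"
    and "finite (proj_real_zeros (Fquart L))"
  shows "card (proj_real_zeros (Fquart L)) \<le> 3"
proof (rule ccontr)
  let ?Z = "proj_real_zeros (Fquart L)"
  assume "\<not> card ?Z \<le> 3"
  hence "4 \<le> card ?Z" by simp
  then obtain B where B: "B \<subseteq> ?Z" "card B = 4" by (meson obtain_subset_with_card_n)
  have "card B = Suc 3" using B(2) by simp
  then obtain l1 B' where B1: "B = insert l1 B'" "l1 \<notin> B'" "card B' = 3"
    unfolding card_Suc_eq by blast
  then obtain l2 l3 l4 where B2: "B' = {l2,l3,l4}" "l2 \<noteq> l3" "l3 \<noteq> l4" "l2 \<noteq> l4"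
    unfolding card_3_iff by blast
  have dl: "l1 \<noteq> l2" "l1 \<noteq> l3" "l1 \<noteq> l4" using B1(2) B2(1) by auto
  have inZ: "l1 \<in> ?Z" "l2 \<in> ?Z" "l3 \<in> ?Z" "l4 \<in> ?Z" using B(1) B1(1) B2(1) by auto
  have rep: "\<exists>v. v \<noteq> 0 \<and> Fquart L v = 0 \<and> l = {t *\<^sub>R v | t. True}" if "l \<in> ?Z" for l
    using that unfolding proj_real_zeros_def by blast
  obtain v1 where v1: "v1 \<noteq> 0" "Fquart L v1 = 0" "l1 = {t *\<^sub>R v1 | t. True}" using rep[OF inZ(1)] by blast
  obtain v2 where v2: "v2 \<noteq> 0" "Fquart L v2 = 0" "l2 = {t *\<^sub>R v2 | t. True}" using rep[OF inZ(2)] by blast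
  obtain v3 where v3: "v3 \<noteq> 0" "Fquart L v3 = 0" "l3 = {t *\<^sub>R v3 | t. True}" using rep[OF inZ(3)] by blast
  obtain v4 where v4: "v4 \<noteq> 0" "Fquart L v4 = 0" "l4 = {t *\<^sub>R v4 | t. True}" using rep[OF inZ(4)] by blast
  have "badline (Fquart L)"
    by (rule key4[OF assms(1) v1(2) v2(2) v3(2) v4(2)];
        rule line_nprop; use v1 v2 v3 v4 dl B2 in simp)
  with badline_infinite assms(2) show False by blast
qed


end
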